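(* For every $n$, $\partial_n^{\rm lb}\big(D_n^{\rm lb}(X,\rho)\big)\subset D_{n-1}^{\rm lb}(X,\rho)$; hence $D_*^{\rm lb}(X,\rho)=\{D_n^{\rm lb}(X,\rho),\partial_n^{\rm lb}\}_{n\in\mathbb Z}$ is a subchain complex of $C_*^{\rm lb}(X)$.
   Context: Let $p$ be an odd prime, $X=\mathbb Z_p$, and $[a,b,c]=a-b+c$ for $a,b,c\in X$. Let $\rho:X^2\to X^2$, $\rho((a,b))=(b,a)$. For pairs with the same first entry define $(a,b)\,\underline{\star}\,(a,c)=(c,[a,b,c])$ and $(a,b)\,\overline{\star}\,(a,c)=(c,[a,c,b])$. For $n\ge1$ let $C_n^{\rm lb}(X)$ be the free abelian group on all tuples $((a,b_1),\dots,(a,b_n))$ with $a,b_1,\dots,b_n\in X$, and $C_n^{\rm lb}(X)=0$ for $n\le0$. For $n\ge2$ define $\partial_n^{\rm lb}:C_n^{\rm lb}(X)\to C_{n-1}^{\rm lb}(X)$ by \[ \partial_n^{\rm lb}((a,b_1),\dots,(a,b_n))=\sum_{i=1}^n(-1)^i\Big\{((a,b_1),\dots,\widehat{(a,b_i)},\dots,(a,b_n)) - \big((a,b_1)\underline\star(a,b_i),\dots,(a,b_{i-1})\underline\star(a,b_i),(a,b_{i+1})\overline\star(a,b_i),\dots,(a,b_n)\overline\star(a,b_i)\big)\Big\}, \] i.e. the second tuple is $((b_i,[a,b_1,b_i]),\dots,(b_i,[a,b_{i-1},b_i]),(b_i,[a,b_i,b_{i+1}]),\dots,(b_i,[a,b_i,b_n]))$;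 and $\partial_n^{\rm lb}=0$ for $n\le1$. This makes $C_*^{\rm lb}(X)$ a chain complex. Let $D_n^{\rm lb}(X,\rho)\subset C_n^{\rm lb}(X)$ be the subgroup generated by all elements \[ ((a,b_1),\dots,(a,b_n))+\big((a,b_1)\underline\star(a,b_i),\dots,(a,b_{i-1})\underline\star(a,b_i),\ \rho((a,b_i)),\ (a,b_{i+1})\overline\star(a,b_i),\dots,(a,b_n)\overline\star(a,b_i)\big) \] for $a,b_1,\dots,b_n\in X$ and $i\in\{1,\dots,n\}$. *)

theory Defs
  imports "HOL-Library.Poly_Mapping" "HOL-Computational_Algebra.Primes"
begin

text \<open>X = Z_p is represented by the integers {0..<p}; the heap operation
  [a,b,c] = a - b + c is computed mod p. A basis tuple ((a,b_1),...,(a,b_n))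
  is a list of pairs. Chains are integer-valued finitely supported functions
  (the free abelian group), type (int * int) list =>0 int.\<close>

definition heap :: "int \<Rightarrow> int \<Rightarrow> int \<Rightarrow> int \<Rightarrow> int" where
  "heap p a b c = (a - b + c) mod p"

definition lb_tuple :: "int \<Rightarrow> int \<Rightarrow> (int \<times> int) list \<Rightarrow> bool" where
  "lb_tuple p n t \<longleftrightarrow> n \<ge> 1 \<and> length t = nat n \<and>
     (\<forall>x\<in>set t. fst x \<in> {0..<p} \<and> snd x \<in> {0..<p}) \<and>
     (\<forall>x\<in>set t. \<forall>y\<in>set t. fst x = fst y)"

definition C_lb :: "int \<Rightarrow> int \<Rightarrow> ((int \<times> int) list \<Rightarrow>\<^sub>0 int) set" where
  "C_lb p n = {c. \<forall>t\<in>Poly_Mapping.keys c. lb_tuple p n t}"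

text \<open>0-based index i corresponds to the paper's index i+1\<close>
definition face :: "(int \<times> int) list \<Rightarrow> nat \<Rightarrow> (int \<times> int) list" where
  "face t i = take i t @ drop (Suc i) t"

definition star_before :: "int \<Rightarrow> (int \<times> int) list \<Rightarrow> nat \<Rightarrow> (int \<times> int) list" where
  "star_before p t i = map (\<lambda>(a,b). (snd (t!i), heap p a b (snd (t!i)))) (take i t)"

definition star_after :: "int \<Rightarrow> (int \<times> int) list \<Rightarrow> nat \<Rightarrow> (int \<times> int) list" where
  "star_after p t i = map (\<lambda>(a,b). (snd (t!i), heap p a (snd (t!i)) b)) (drop (Suc i) t)"

definition star_face :: "int \<Rightarrow> (int \<times> int) list \<Rightarrow> nat \<Rightarrow> (int \<times> int) list" where
  "star_face p t i = star_before p t i @ star_after p t i"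

definition rho_tuple :: "int \<Rightarrow> (int \<times> int) list \<Rightarrow> nat \<Rightarrow> (int \<times> int) list" where
  "rho_tuple p t i = star_before p t i @ [(snd (t!i), fst (t!i))] @ star_after p t i"

definition bd_gen :: "int \<Rightarrow> (int \<times> int) list \<Rightarrow> (int \<times> int) list \<Rightarrow>\<^sub>0 int" where
  "bd_gen p t = (\<Sum>i<length t. frag_cmul ((-1) ^ (i+1))
      (frag_of (face t i) - frag_of (star_face p t i)))"

definition bd_lb :: "int \<Rightarrow> int \<Rightarrow> ((int \<times> int) list \<Rightarrow>\<^sub>0 int) \<Rightarrow> (int \<times> int) list \<Rightarrow>\<^sub>0 int" where
  "bd_lb p n c = (if n \<ge> 2 then frag_extend (bd_gen p) c else 0)"

inductive_set D_lb :: "int \<Rightarrow> int \<Rightarrow> ((int \<times> int) list \<Rightarrow>\<^sub>0 int) set" for p n where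
  zero: "0 \<in> D_lb p n"
| gen: "lb_tuple p n t \<Longrightarrow> i < length t \<Longrightarrow>
        frag_of t + frag_of (rho_tuple p t i) \<in> D_lb p n"
| diff: "x \<in> D_lb p n \<Longrightarrow> y \<in> D_lb p n \<Longrightarrow> x - y \<in> D_lb p n"

end

theory Submission imports Defs begin

lemma D_neg: "x \<in> D_lb p n \<Longrightarrow> - x \<in> D_lb p n"
  using D_lb.diff[OF D_lb.zero] by fastforce
lemma D_add: "x \<in> D_lb p n \<Longrightarrow> y \<in> D_lb p n \<Longrightarrow> x + y \<in> D_lb p n"
  using D_lb.diff[OF _ D_neg] by fastforce
lemma D_cmul_sign: "x \<in> D_lb p n \<Longrightarrow> frag_cmul ((-1)^k) x \<in> D_lb p n"
  by (cases "even k") (auto intro: D_neg)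
lemma D_sum: "(\<And>j. j \<in> A \<Longrightarrow> f j \<in> D_lb p n) \<Longrightarrow> sum f A \<in> D_lb p n"
  by (induction A rule: infinite_finite_induct) (auto intro: D_add D_lb.zero)

lemma len_face[simp]: "i < length t \<Longrightarrow> length (face t i) = length t - 1"
  by (simp add: face_def)
lemma len_star_face[simp]: "i < length t \<Longrightarrow> length (star_face p t i) = length t - 1"
  by (simp add: star_face_def star_before_def star_after_def)
lemma len_rho[simp]: "i < length t \<Longrightarrow> length (rho_tuple p t i) = length t"
  by (simp add: rho_tuple_def star_before_def star_after_def)

lemma nth_face: "k < length t - 1 \<Longrightarrow> face t j ! k = (if k < j then t!k else t!Suc k)"
  by (auto simp: face_def nth_append)

lemma nth_star_face: "k < length t - 1 \<Longrightarrow> i < length t \<Longrightarrow> star_face p t i ! k =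
   (if k < i then (snd (t!i), heap p (fst (t!k)) (snd (t!k)) (snd (t!i)))
    else (snd (t!i), heap p (fst (t!Suc k)) (snd (t!i)) (snd (t!Suc k))))"
  by (auto simp: star_face_def star_before_def star_after_def nth_append split: prod.splits)

lemma nth_rho: "k < length t \<Longrightarrow> i < length t \<Longrightarrow> rho_tuple p t i ! k =
   (if k < i then (snd (t!i), heap p (fst (t!k)) (snd (t!k)) (snd (t!i)))
    else if k = i then (snd (t!i), fst (t!i))
    else (snd (t!i), heap p (fst (t!k)) (snd (t!i)) (snd (t!k))))"
  by (auto simp: rho_tuple_def star_before_def star_after_def nth_append split: prod.splits)

lemma heap1: "heap p (heap p x y z) u v = heap p (x - y + z) u v"
  unfolding heap_def by (metis mod_add_left_eq mod_diff_left_eq)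
lemma heap2: "heap p u (heap p x y z) v = heap p u (x - y + z) v"
  unfolding heap_def by (metis mod_add_left_eq mod_diff_right_eq)
lemma heap3: "heap p u v (heap p x y z) = heap p u v (x - y + z)"
  by (simp add: heap_def mod_simps)

lemma mod_in: "x \<in> {0..<p} \<Longrightarrow> (x::int) mod p = x"
  by simp

locale tup =
  fixes p :: int and t :: "(int \<times> int) list" and a :: int and i :: nat
  assumes F: "\<And>k. k < length t \<Longrightarrow> fst (t!k) = a"
    and R: "\<And>k. k < length t \<Longrightarrow> snd (t!k) \<in> {0..<p}"
    and A: "a \<in> {0..<p}" and I: "i < length t"
begin

lemma Rm: "k < length t \<Longrightarrow> snd (t!k) mod p = snd (t!k)"
  using R mod_in by blast
lemma Am: "a mod p = a" using A mod_in by blast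

lemma c1: "face (rho_tuple p t i) i = star_face p t i"
  using I by (intro nth_equalityI) (auto simp: nth_face nth_rho nth_star_face F)

lemma c2: "star_face p (rho_tuple p t i) i = face t i"
  using I by (intro nth_equalityI)
    (auto simp: prod_eq_iff nth_face nth_rho nth_star_face F heap1 heap2 heap3 Rm Am, auto simp: heap_def algebra_simps Rm Am)

lemma cA: "j < i \<Longrightarrow> face (rho_tuple p t i) j = rho_tuple p (face t j) (i-1)"
  using I by (intro nth_equalityI)
    (auto simp: prod_eq_iff nth_face nth_rho nth_star_face F heap1 heap2 heap3 Rm Am)

lemma cB: "i < j \<Longrightarrow> j < length t \<Longrightarrow> face (rho_tuple p t i) j = rho_tuple p (face t j) i"
  using I by (intro nth_equalityI)
    (auto simp: prod_eq_iff nth_face nth_rho nth_star_face F heap1 heap2 heap3 Rm Am)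

lemma cC: "j < i \<Longrightarrow> star_face p (rho_tuple p t i) j = rho_tuple p (star_face p t j) (i-1)"
  using I by (intro nth_equalityI)
    (auto simp: prod_eq_iff nth_face nth_rho nth_star_face F heap1 heap2 heap3 Rm Am, auto simp: heap_def algebra_simps Rm Am)

lemma cD: "i < j \<Longrightarrow> j < length t \<Longrightarrow> star_face p (rho_tuple p t i) j = rho_tuple p (star_face p t j) i"
  using I by (intro nth_equalityI)
    (auto simp: prod_eq_iff nth_face nth_rho nth_star_face F heap1 heap2 heap3 Rm Am, auto simp: heap_def algebra_simps Rm Am)

end

lemma lb_nth: "lb_tuple p n t \<longleftrightarrow> n \<ge> 1 \<and> length t = nat n \<and>
   (\<forall>k<length t. fst (t!k) \<in> {0..<p} \<and> snd (t!k) \<in> {0..<p}) \<and>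
   (\<forall>k<length t. \<forall>l<length t. fst (t!k) = fst (t!l))"
  unfolding lb_tuple_def by (simp add: all_set_conv_all_nth)

lemma heap_rng: "p > 0 \<Longrightarrow> heap p x y z \<in> {0..<p}"
  by (simp add: heap_def)

lemma fst_rho: "k < length t \<Longrightarrow> i < length t \<Longrightarrow> fst (rho_tuple p t i ! k) = snd (t!i)"
  by (simp add: nth_rho)
lemma fst_star: "k < length t - 1 \<Longrightarrow> i < length t \<Longrightarrow> fst (star_face p t i ! k) = snd (t!i)"
  by (simp add: nth_star_face)
lemma snd_rho: "p > 0 \<Longrightarrow> fst (t!i) \<in> {0..<p} \<Longrightarrow> k < length t \<Longrightarrow> i < length t \<Longrightarrow> snd (rho_tuple p t i ! k) \<in> {0..<p}"
  by (simp add: nth_rho heap_rng del: atLeastLessThan_iff)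
lemma snd_star: "p > 0 \<Longrightarrow> k < length t - 1 \<Longrightarrow> i < length t \<Longrightarrow> snd (star_face p t i ! k) \<in> {0..<p}"
  by (simp add: nth_star_face heap_rng del: atLeastLessThan_iff)

lemma lb_face: "lb_tuple p n t \<Longrightarrow> n \<ge> 2 \<Longrightarrow> j < length t \<Longrightarrow> lb_tuple p (n-1) (face t j)"
proof -
  assume a: "lb_tuple p n t" "n \<ge> 2" "j < length t"
  have "set (face t j) \<subseteq> set t" unfolding face_def
    using set_take_subset set_drop_subset by fastforce
  then show ?thesis using a unfolding lb_tuple_def by (auto simp: nat_diff_distrib)
qed

lemma lb_star: "p > 0 \<Longrightarrow> lb_tuple p n t \<Longrightarrow> n \<ge> 2 \<Longrightarrow> j < length t \<Longrightarrow> lb_tuple p (n-1) (star_face p t j)"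
proof -
  assume a: "p > 0" "lb_tuple p n t" "n \<ge> 2" "j < length t"
  then have l: "length t = nat n" and f: "snd (t!j) \<in> {0..<p}" unfolding lb_nth by blast+
  show ?thesis unfolding lb_nth
    using a(1,3,4) l f fst_star[of _ t j p] snd_star[of p _ t j]
    by (simp add: nat_diff_distrib del: atLeastLessThan_iff)
qed

lemma lb_rho: "p > 0 \<Longrightarrow> lb_tuple p n t \<Longrightarrow> j < length t \<Longrightarrow> lb_tuple p n (rho_tuple p t j)"
proof -
  assume a: "p > 0" "lb_tuple p n t" "j < length t"
  then have l: "length t = nat n" "n \<ge> 1" and f: "fst (t!j) \<in> {0..<p}" "snd (t!j) \<in> {0..<p}" unfolding lb_nth by blast+
  show ?thesis unfolding lb_nth
    using a(1,3) l f fst_rho[of _ t j p] snd_rho[of p t j]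
    by (simp del: atLeastLessThan_iff)
qed


lemma gen_bd:
  assumes p: "p > 0" and t: "lb_tuple p n t" and n: "n \<ge> 2" and i: "i < length t"
  shows "bd_gen p t + bd_gen p (rho_tuple p t i) \<in> D_lb p (n-1)"
proof -
  have tl: "\<forall>k<length t. fst (t!k) \<in> {0..<p} \<and> snd (t!k) \<in> {0..<p}"
    "\<forall>k<length t. \<forall>l<length t. fst (t!k) = fst (t!l)" using t unfolding lb_nth by blast+
  interpret tup p t "fst (t!0)" i
  proof
    show "\<And>k. k < length t \<Longrightarrow> fst (t!k) = fst (t!0)"
    proof -
      fix k assume "k < length t"
      moreover have "0 < length t" using i by linarith
      ultimately show "fst (t!k) = fst (t!0)" using tl(2) by blast
    qed
    show "\<And>k. k < length t \<Longrightarrow> snd (t!k) \<in> {0..<p}" using tl(1) by blast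
    show "fst (t!0) \<in> {0..<p}"
    proof -
      have "0 < length t" using i by linarith
      then show ?thesis using tl(1) by blast
    qed
    show "i < length t" by (rule i)
  qed
  define r where "r = rho_tuple p t i"
  define f where "f j = frag_cmul ((-1) ^ (j+1)) (frag_of (face t j) - frag_of (star_face p t j))" for j
  define g where "g j = frag_cmul ((-1) ^ (j+1)) (frag_of (face r j) - frag_of (star_face p r j))" for j
  have lr: "length r = length t" using i by (simp add: r_def)
  have eq: "bd_gen p t + bd_gen p r = (\<Sum>j<length t. f j + g j)"
    unfolding bd_gen_def f_def g_def lr by (simp add: sum.distrib)
  have "f j + g j \<in> D_lb p (n-1)" if j: "j < length t" for j
  proof -
    have fg: "f j + g j = frag_cmul ((-1) ^ (j+1)) ((frag_of (face t j) - frag_of (star_face p t j))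
          + (frag_of (face r j) - frag_of (star_face p r j)))"
      unfolding f_def g_def by (simp add: frag_cmul_distrib2)
    consider "j = i" | "j < i" | "i < j" by linarith
    then show ?thesis
    proof cases
      case 1
      then show ?thesis unfolding fg r_def by (simp add: c1 c2 D_lb.zero)
    next
      case 2
      have X: "frag_of (face t j) + frag_of (rho_tuple p (face t j) (i-1)) \<in> D_lb p (n-1)"
        by (rule D_lb.gen) (use lb_face[OF t n j] 2 i in auto)
      have Y: "frag_of (star_face p t j) + frag_of (rho_tuple p (star_face p t j) (i-1)) \<in> D_lb p (n-1)"
        by (rule D_lb.gen) (use lb_star[OF p t n j] 2 i in auto)
      have "(frag_of (face t j) - frag_of (star_face p t j))
          + (frag_of (face r j) - frag_of (star_face p r j)) =
          (frag_of (face t j) + frag_of (rho_tuple p (face t j) (i-1))) -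
          (frag_of (star_face p t j) + frag_of (rho_tuple p (star_face p t j) (i-1)))"
        unfolding r_def using 2 by (simp add: cA cC algebra_simps)
      note e = this
      show ?thesis unfolding fg e by (intro D_cmul_sign D_lb.diff X Y)
    next
      case 3
      have X: "frag_of (face t j) + frag_of (rho_tuple p (face t j) i) \<in> D_lb p (n-1)"
        by (rule D_lb.gen) (use lb_face[OF t n j] 3 j in auto)
      have Y: "frag_of (star_face p t j) + frag_of (rho_tuple p (star_face p t j) i) \<in> D_lb p (n-1)"
        by (rule D_lb.gen) (use lb_star[OF p t n j] 3 j in auto)
      have "(frag_of (face t j) - frag_of (star_face p t j))
          + (frag_of (face r j) - frag_of (star_face p r j)) =
          (frag_of (face t j) + frag_of (rho_tuple p (face t j) i)) -
          (frag_of (star_face p t j) + frag_of (rho_tuple p (star_face p t j) i))"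
        unfolding r_def using 3 j by (simp add: cB cD algebra_simps)
      note e = this
      show ?thesis unfolding fg e by (intro D_cmul_sign D_lb.diff X Y)
    qed
  qed
  then show ?thesis unfolding r_def[symmetric] eq by (intro D_sum) auto
qed

theorem lemma3p1:
  fixes p :: int
  assumes "prime p" and "odd p"
  shows "\<forall>n::int. D_lb p n \<subseteq> C_lb p n \<and> bd_lb p n ` D_lb p n \<subseteq> D_lb p (n - 1)"
proof
  fix n :: int
  have p: "p > 0" using assms(1) prime_gt_0_int by blast
  have "x \<in> C_lb p n" if "x \<in> D_lb p n" for x
    using that
  proof induction
    case zero then show ?case by (simp add: C_lb_def)
  next
    case (gen t i)
    have "Poly_Mapping.keys (frag_of t + frag_of (rho_tuple p t i)) \<subseteq> {t, rho_tuple p t i}"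
      using keys_add[of "frag_of t" "frag_of (rho_tuple p t i)"] keys_frag_of[of t] keys_frag_of[of "rho_tuple p t i"] by blast
    then show ?case using gen lb_rho[OF p gen(1) gen(2)] unfolding C_lb_def by blast
  next
    case (diff x y)
    then show ?case using keys_diff[of x y] unfolding C_lb_def by blast
  qed
  moreover have "bd_lb p n x \<in> D_lb p (n-1)" if "x \<in> D_lb p n" for x
  proof (cases "n \<ge> 2")
    case False then show ?thesis by (simp add: bd_lb_def D_lb.zero)
  next
    case True
    show ?thesis using that
    proof induction
      case zero then show ?case by (simp add: bd_lb_def D_lb.zero)
    next
      case (gen t i)
      then show ?case using True gen_bd[OF p gen(1) True gen(2)]
        by (simp add: bd_lb_def frag_extend_add)
    next
      case (diff x y)
      then show ?case using True by (simp add: bd_lb_def frag_extend_diff D_lb.diff)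
    qed
  qed
  ultimately show "D_lb p n \<subseteq> C_lb p n \<and> bd_lb p n ` D_lb p n \<subseteq> D_lb p (n - 1)" by blast
qed

end
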